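(* Let $(k_i)_{i\in\mathbb N}\subset\mathbb N$ be the coding sequence of an interval translation map of infinite type. Then the $S$-adic subshift $(X,\sigma)$ based on the substitutions $(\chi_{k_i})_{i\in\mathbb N}$ is primitive, combinatorially recognizable and aperiodic.
   Context: Coding sequences of infinite-type maps in the family $T_{\alpha,\beta}(x)=x+\alpha$ on $[0,1-\alpha)$, $x+\beta$ on $[1-\alpha,1-\beta)$, $x-1+\beta$ on $[1-\beta,1]$ ($0<\beta\le\alpha\le1$) are exactly the sequences $(k_i)$ in $\mathbb N=\{1,2,\dots\}$ with $k_{2i}>1$ for infinitely many $i$ and $k_{2i-1}>1$ for infinitely many $i$. For $k\in\mathbb N$, $\chi_k$ is the substitution on $\{1,2,3\}$: $1\mapsto2$, $2\mapsto31^k$, $3\mapsto31^{k-1}$. An $S$-adic subshift based on substitutions $\chi_i:\mathcal A_i\to\mathcal A_{i-1}^+$ (here all alphabets are $\{1,2,3\}$ and $\chi_i=\chi_{k_i}$) is the shift-orbit closure $X$ of the set of accumulation points of $\{\chi_1\circ\cdots\circ\chi_n(a): n\in\mathbb N, a\in\mathcal A_n\}$; for $i\ge1$ let $X_i$ denote the $S$-adic subshift based on $(\chi_j)_{j\ge i}$. It is primitive if for every $m$ there is $n\ge m$ such that for all $a\in\mathcal A_n$ the word $\chi_m\circ\cdots\circ\chi_n(a)$ contains every letter of $\mathcal A_{m-1}$. A substitution $\chi$, relative to a subshift $Y$, is combinatorially recognizable if there is $N$ such that for every word $w$ occurring in $Y$ with $|w|\ge N$ and every word $v=v_1\cdots v_n$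 such that $w$ occurs twice in $\chi(v)$, the first occurrence of $w$ starts at a position of the form $|\chi(v_1\cdots v_i)|$ (some $0\le i<n$) if and only if the second occurrence starts at a position of the form $|\chi(v_1\cdots v_j)|$ (some $0\le j<n$). The $S$-adic subshift is combinatorially recognizable if each $\chi_i$ is combinatorially recognizable relative to $X_i$ (with $N$ allowed to depend on $i$). It is aperiodic if there is no $x\in X$ and $k\in\mathbb N$ with $\sigma^k x=x$. *)

theory Defs
  imports Main
begin

text \<open>Letters are the natural numbers 1, 2, 3; finite words are lists, one-sided
infinite words are functions nat => nat.  Coding sequences are indexed from 1
(the value at index 0 is irrelevant).\<close>

definition alphabet :: "nat set" where
  "alphabet = {1, 2, 3}"

definition chi :: "nat \<Rightarrow> nat \<Rightarrow> nat list" where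
  "chi k a = (if a = 1 then [2]
              else if a = 2 then 3 # replicate k 1
              else if a = 3 then 3 # replicate (k - 1) 1
              else [])"

definition subst_word :: "(nat \<Rightarrow> nat list) \<Rightarrow> nat list \<Rightarrow> nat list" where
  "subst_word s w = concat (map s w)"

text \<open>chi_{k_m} o ... o chi_{k_n} applied to a word (chi_{k_n} applied first).\<close>
definition chi_comp :: "(nat \<Rightarrow> nat) \<Rightarrow> nat \<Rightarrow> nat \<Rightarrow> nat list \<Rightarrow> nat list" where
  "chi_comp ks m n w = foldr (\<lambda>j u. subst_word (chi (ks j)) u) [m..<Suc n] w"

definition coding_seq_infinite_type :: "(nat \<Rightarrow> nat) \<Rightarrow> bool" where
  "coding_seq_infinite_type ks \<longleftrightarrow>
     (\<forall>i\<ge>1. ks i \<ge> 1) \<and>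
     infinite {i. i \<ge> 1 \<and> ks (2 * i) > 1} \<and>
     infinite {i. i \<ge> 1 \<and> ks (2 * i - 1) > 1}"

text \<open>Accumulation points (in A^N, w.r.t. the prefix topology on A^* \<union> A^N) of a set of finite words.\<close>
definition acc_points :: "nat list set \<Rightarrow> (nat \<Rightarrow> nat) set" where
  "acc_points W = {x. \<forall>m. \<exists>w\<in>W. m \<le> length w \<and> (\<forall>j<m. w ! j = x j)}"

definition orbit_closure :: "(nat \<Rightarrow> nat) set \<Rightarrow> (nat \<Rightarrow> nat) set" where
  "orbit_closure A = {x. \<forall>m. \<exists>y\<in>A. \<exists>j. \<forall>t<m. y (j + t) = x t}"

definition shift :: "(nat \<Rightarrow> nat) \<Rightarrow> nat \<Rightarrow> nat" where
  "shift x = (\<lambda>t. x (Suc t))"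

definition sadic_subshift :: "(nat \<Rightarrow> nat) \<Rightarrow> nat \<Rightarrow> (nat \<Rightarrow> nat) set" where
  "sadic_subshift ks i =
     orbit_closure (acc_points {chi_comp ks i n [a] | n a. n \<ge> i \<and> a \<in> alphabet})"

definition sadic_primitive :: "(nat \<Rightarrow> nat) \<Rightarrow> bool" where
  "sadic_primitive ks \<longleftrightarrow>
     (\<forall>m\<ge>1. \<exists>n\<ge>m. \<forall>a\<in>alphabet. alphabet \<subseteq> set (chi_comp ks m n [a]))"

definition occurs_at :: "nat list \<Rightarrow> nat list \<Rightarrow> nat \<Rightarrow> bool" where
  "occurs_at w u p \<longleftrightarrow> p + length w \<le> length u \<and> take (length w) (drop p u) = w"

definition factor_of :: "nat list \<Rightarrow> (nat \<Rightarrow> nat) \<Rightarrow> bool" where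
  "factor_of w y \<longleftrightarrow> (\<exists>j. \<forall>t<length w. y (j + t) = w ! t)"

definition cut_points :: "(nat \<Rightarrow> nat list) \<Rightarrow> nat list \<Rightarrow> nat set" where
  "cut_points s v = {length (subst_word s (take i v)) | i. i < length v}"

definition comb_recognizable :: "(nat \<Rightarrow> nat list) \<Rightarrow> (nat \<Rightarrow> nat) set \<Rightarrow> bool" where
  "comb_recognizable s Y \<longleftrightarrow>
     (\<exists>N. \<forall>w v p q.
        (\<exists>y\<in>Y. factor_of w y) \<and> length w \<ge> N \<and> set v \<subseteq> alphabet \<and>
        occurs_at w (subst_word s v) p \<and> occurs_at w (subst_word s v) q \<longrightarrow>
        (p \<in> cut_points s v \<longleftrightarrow> q \<in> cut_points s v))"

definition sadic_comb_recognizable :: "(nat \<Rightarrow> nat) \<Rightarrow> bool" where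
  "sadic_comb_recognizable ks \<longleftrightarrow>
     (\<forall>i\<ge>1. comb_recognizable (chi (ks i)) (sadic_subshift ks i))"

definition aperiodic :: "(nat \<Rightarrow> nat) set \<Rightarrow> bool" where
  "aperiodic X \<longleftrightarrow> \<not> (\<exists>x\<in>X. \<exists>k\<ge>1. (shift ^^ k) x = x)"

end

theory Submission
  imports Defs "HOL-Library.Sublist" "HOL-Library.Infinite_Set"
begin


abbreviation sw :: "nat \<Rightarrow> nat list \<Rightarrow> nat list" where
  "sw k v \<equiv> subst_word (chi k) v"

lemma alph_iff: "a \<in> alphabet \<longleftrightarrow> a = 1 \<or> a = 2 \<or> a = 3"
  by (auto simp: alphabet_def)

lemma sw_Nil[simp]: "subst_word s [] = []" by (simp add: subst_word_def)
lemma sw_Cons[simp]: "subst_word s (a # v) = s a @ subst_word s v" by (simp add: subst_word_def)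
lemma sw_append[simp]: "subst_word s (v @ w) = subst_word s v @ subst_word s w" by (simp add: subst_word_def)

lemma chi_ne: "a \<in> alphabet \<Longrightarrow> chi k a \<noteq> []"
  by (auto simp: alph_iff chi_def)
lemma chi_hd: "a \<in> alphabet \<Longrightarrow> chi k a ! 0 \<noteq> 1"
  by (auto simp: alph_iff chi_def)
lemma chi_tail: "a \<in> alphabet \<Longrightarrow> 0 < t \<Longrightarrow> t < length (chi k a) \<Longrightarrow> chi k a ! t = 1"
  by (cases t) (auto simp: alph_iff chi_def)
lemma chi_set: "a \<in> alphabet \<Longrightarrow> set (chi k a) \<subseteq> alphabet"
  by (auto simp: alph_iff chi_def)
lemma chi_len: "a \<in> alphabet \<Longrightarrow> k \<ge> 1 \<Longrightarrow> length (chi k a) \<le> Suc k"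
  by (auto simp: alph_iff chi_def)
lemma chi_inj: "a \<in> alphabet \<Longrightarrow> b \<in> alphabet \<Longrightarrow> k \<ge> 1 \<Longrightarrow> chi k a = chi k b \<Longrightarrow> a = b"
  by (auto simp: alph_iff chi_def)

lemma sw_set: "set v \<subseteq> alphabet \<Longrightarrow> set (sw k v) \<subseteq> alphabet"
  by (induction v) (use chi_set in auto)

lemma sw_ne: "set v \<subseteq> alphabet \<Longrightarrow> v \<noteq> [] \<Longrightarrow> sw k v \<noteq> [] \<and> hd (sw k v) \<noteq> 1"
  by (cases v) (use chi_ne chi_hd in \<open>auto simp: hd_conv_nth nth_append\<close>)

lemma sw_len: "set v \<subseteq> alphabet \<Longrightarrow> length v \<le> length (sw k v)"
proof (induction v)
  case (Cons a v) then show ?case using chi_ne[of a k] by (cases "chi k a") auto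
qed simp

lemma sw_len_strict: "set v \<subseteq> alphabet \<Longrightarrow> 1 \<in> set (sw k v) \<Longrightarrow> length v < length (sw k v)"
proof (induction v)
  case (Cons a v)
  show ?case
  proof (cases "1 \<in> set (chi k a)")
    case True
    then obtain t where t: "t < length (chi k a)" "chi k a ! t = 1" by (meson in_set_conv_nth)
    have "t \<noteq> 0" using chi_hd[of a k] Cons.prems t by (metis list.set_intros(1) subset_code(1))
    with t have "length (chi k a) \<ge> 2" by auto
    then show ?thesis using sw_len[of v k] Cons.prems by auto
  next
    case False
    then show ?thesis using Cons chi_ne[of a k] by (cases "chi k a") auto
  qed
qed simp

lemma cut_points_Cons:
  "cut_points s (b # v) = insert 0 ((+) (length (s b)) ` cut_points s v)"
proof -
  have "cut_points s (b # v) = {length (subst_word s (take i (b # v))) | i. i < Suc (length v)}"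
    by (simp add: cut_points_def)
  also have "\<dots> = insert 0 ((+) (length (s b)) ` cut_points s v)"
  proof (intro set_eqI iffI)
    fix x assume "x \<in> {length (subst_word s (take i (b # v))) | i. i < Suc (length v)}"
    then obtain i where i: "i < Suc (length v)" "x = length (subst_word s (take i (b # v)))" by auto
    then show "x \<in> insert 0 ((+) (length (s b)) ` cut_points s v)"
      by (cases i) (auto simp: cut_points_def)
  next
    fix x assume "x \<in> insert 0 ((+) (length (s b)) ` cut_points s v)"
    then show "x \<in> {length (subst_word s (take i (b # v))) | i. i < Suc (length v)}"
    proof
      assume "x = 0" then show ?thesis by (rule_tac CollectI, rule_tac x=0 in exI) auto
    next
      assume "x \<in> (+) (length (s b)) ` cut_points s v"
      then obtain i where "i < length v" "x = length (s b) + length (subst_word s (take i v))"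
        by (auto simp: cut_points_def)
      then show ?thesis by (rule_tac CollectI, rule_tac x="Suc i" in exI) auto
    qed
  qed
  finally show ?thesis .
qed

lemma cut_iff: "set v \<subseteq> alphabet \<Longrightarrow> p < length (sw k v) \<Longrightarrow>
   (p \<in> cut_points (chi k) v \<longleftrightarrow> sw k v ! p \<noteq> 1)"
proof (induction v arbitrary: p)
  case Nil then show ?case by simp
next
  case (Cons b v)
  have b: "b \<in> alphabet" and v: "set v \<subseteq> alphabet" using Cons.prems by auto
  show ?case
  proof (cases "p < length (chi k b)")
    case True
    then show ?thesis using chi_hd[OF b, of k] chi_tail[OF b, of p k]
      by (auto simp: cut_points_Cons nth_append)
  next
    case False
    then have "p - length (chi k b) < length (sw k v)" using Cons.prems by auto
    note ih = Cons.IH[OF v this]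
    have p0: "p \<noteq> 0" using False chi_ne[OF b, of k] by (cases "chi k b") auto
    have "p \<in> cut_points (chi k) (b # v) \<longleftrightarrow> p - length (chi k b) \<in> cut_points (chi k) v"
      using False p0 by (auto simp: cut_points_Cons image_iff intro: bexI[of _ "p - length (chi k b)"])
    then show ?thesis using ih False by (simp add: nth_append)
  qed
qed

lemma recog: "comb_recognizable (chi k) Y"
  unfolding comb_recognizable_def
proof (intro exI[of _ 1] allI impI)
  fix w v p q
  assume a: "(\<exists>y\<in>Y. factor_of w y) \<and> 1 \<le> length w \<and> set v \<subseteq> alphabet \<and>
       occurs_at w (sw k v) p \<and> occurs_at w (sw k v) q"
  then have v: "set v \<subseteq> alphabet" and w: "w \<noteq> []" by auto
  have key: "r < length (sw k v) \<and> sw k v ! r = w ! 0" if "occurs_at w (sw k v) r" for r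
  proof -
    from that have r: "r + length w \<le> length (sw k v)" "take (length w) (drop r (sw k v)) = w"
      by (auto simp: occurs_at_def)
    then have "w ! 0 = take (length w) (drop r (sw k v)) ! 0" by simp
    also have "\<dots> = sw k v ! r" using w r(1) by (simp add: nth_take)
    finally show ?thesis using w r by (simp add: Suc_le_eq length_greater_0_conv[symmetric] del: length_greater_0_conv)
  qed
  show "p \<in> cut_points (chi k) v \<longleftrightarrow> q \<in> cut_points (chi k) v"
    using key[of p] key[of q] a cut_iff[OF v, of p k] cut_iff[OF v, of q k] by auto
qed



lemma cut_lemma: "set v \<subseteq> alphabet \<Longrightarrow> sw k v = ps @ rest \<Longrightarrow> rest \<noteq> [] \<Longrightarrow> hd rest \<noteq> 1
  \<Longrightarrow> \<exists>i. sw k (drop i v) = rest"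
proof (induction v arbitrary: ps)
  case Nil then show ?case by simp
next
  case (Cons b v)
  have b: "b \<in> alphabet" and v: "set v \<subseteq> alphabet" using Cons.prems by auto
  show ?case
  proof (cases "ps = []")
    case True then show ?thesis using Cons.prems by (intro exI[of _ 0]) auto
  next
    case False
    show ?thesis
    proof (cases "length ps < length (chi k b)")
      case True
      have "(chi k b @ sw k v) ! length ps = (ps @ rest) ! length ps" using Cons.prems(2) by simp
      then have "chi k b ! length ps = hd rest" using True Cons.prems(3) by (simp add: nth_append hd_conv_nth)
      moreover have "chi k b ! length ps = 1" using chi_tail[OF b, of "length ps" k] True False by simp
      ultimately show ?thesis using Cons.prems(4) by simp
    next
      case False
      then obtain ps' where "ps = chi k b @ ps'" "sw k v = ps' @ rest" using Cons.prems(2)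
        by (auto simp: append_eq_append_conv2)
      from Cons.IH[OF v this(2) Cons.prems(3,4)] obtain i where "sw k (drop i v) = rest" by blast
      then show ?thesis by (intro exI[of _ "Suc i"]) simp
    qed
  qed
qed

lemma prefix_exist: "set u \<subseteq> alphabet \<Longrightarrow> sw k u = w @ c # ss \<Longrightarrow> c \<noteq> 1 \<Longrightarrow>
   \<exists>y. set y \<subseteq> alphabet \<and> w = sw k y \<and> prefix y u"
proof (induction u arbitrary: w)
  case Nil then show ?case by simp
next
  case (Cons d u)
  have d: "d \<in> alphabet" and u: "set u \<subseteq> alphabet" using Cons.prems by auto
  show ?case
  proof (cases "w = []")
    case True then show ?thesis by (intro exI[of _ "[]"]) auto
  next
    case wne: False
    show ?thesis
    proof (cases "length w < length (chi k d)")
      case True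
      have "(chi k d @ sw k u) ! length w = (w @ c # ss) ! length w" using Cons.prems(2) by simp
      then have "chi k d ! length w = c" using True by (simp add: nth_append)
      moreover have "chi k d ! length w = 1" using chi_tail[OF d, of "length w" k] True wne by simp
      ultimately show ?thesis using Cons.prems(3) by simp
    next
      case False
      then obtain w' where "w = chi k d @ w'" "sw k u = w' @ c # ss" using Cons.prems(2)
        by (auto simp: append_eq_append_conv2)
      from Cons.IH[OF u this(2) Cons.prems(3)] obtain y where
        "set y \<subseteq> alphabet" "w' = sw k y" "prefix y u" by blast
      then show ?thesis using \<open>w = chi k d @ w'\<close> d by (intro exI[of _ "d # y"]) auto
    qed
  qed
qed

lemma decode: "set v \<subseteq> alphabet \<Longrightarrow> sublist (w @ [c]) (sw k v) \<Longrightarrow> w \<noteq> [] \<Longrightarrow> hd w \<noteq> 1 \<Longrightarrow> c \<noteq> 1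
  \<Longrightarrow> \<exists>y. set y \<subseteq> alphabet \<and> w = sw k y \<and> sublist y v"
proof -
  assume v: "set v \<subseteq> alphabet" and sl: "sublist (w @ [c]) (sw k v)" and w: "w \<noteq> []" "hd w \<noteq> 1"
    and c: "c \<noteq> 1"
  from sl obtain ps ss where e: "sw k v = ps @ (w @ c # ss)" by (auto simp: sublist_def)
  from cut_lemma[OF v e] w obtain i where "sw k (drop i v) = w @ c # ss" by auto
  from prefix_exist[OF _ this c] v obtain y where "set y \<subseteq> alphabet" "w = sw k y" "prefix y (drop i v)"
    by (meson in_set_dropD subset_code(1))
  moreover have "sublist y v" using \<open>prefix y (drop i v)\<close>
    by (metis append_take_drop_id prefix_imp_sublist sublist_append sublist_order.dual_order.trans)
  ultimately show ?thesis by blast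
qed

lemma block_eq: "b \<in> alphabet \<Longrightarrow> d \<in> alphabet \<Longrightarrow> chi k d @ X = chi k b @ Y \<Longrightarrow>
   (X = [] \<or> hd X \<noteq> 1) \<Longrightarrow> (Y = [] \<or> hd Y \<noteq> 1) \<Longrightarrow> chi k d = chi k b"
proof -
  assume b: "b \<in> alphabet" and d: "d \<in> alphabet" and e: "chi k d @ X = chi k b @ Y"
    and X: "X = [] \<or> hd X \<noteq> 1" and Y: "Y = [] \<or> hd Y \<noteq> 1"
  have "\<not> length (chi k d) < length (chi k b)"
  proof
    assume lt: "length (chi k d) < length (chi k b)"
    have "(chi k d @ X) ! length (chi k d) = (chi k b @ Y) ! length (chi k d)" using e by simp
    moreover have "X \<noteq> []" using lt e by (metis append_Nil2 length_append not_add_less1)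
    ultimately have "hd X = chi k b ! length (chi k d)" using lt by (simp add: nth_append hd_conv_nth)
    also have "\<dots> = 1" using chi_tail[OF b] lt chi_ne[OF d] by blast
    finally show False using X \<open>X \<noteq> []\<close> by simp
  qed
  moreover have "\<not> length (chi k b) < length (chi k d)"
  proof
    assume lt: "length (chi k b) < length (chi k d)"
    have "(chi k d @ X) ! length (chi k b) = (chi k b @ Y) ! length (chi k b)" using e by simp
    moreover have "Y \<noteq> []" using lt e by (metis append_Nil2 length_append not_add_less1)
    ultimately have "hd Y = chi k d ! length (chi k b)" using lt by (simp add: nth_append hd_conv_nth)
    also have "\<dots> = 1" using chi_tail[OF d] lt chi_ne[OF b] by blast
    finally show False using Y \<open>Y \<noteq> []\<close> by simp
  qed
  ultimately have "length (chi k d) = length (chi k b)" by simp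
  then show ?thesis using e by (simp add: append_eq_append_conv)
qed

lemma sw_inj: "k \<ge> 1 \<Longrightarrow> set y \<subseteq> alphabet \<Longrightarrow> set z \<subseteq> alphabet \<Longrightarrow> sw k y = sw k z \<Longrightarrow> y = z"
proof (induction y arbitrary: z)
  case Nil then show ?case using sw_ne[of z k] by auto
next
  case (Cons b y)
  have b: "b \<in> alphabet" and y: "set y \<subseteq> alphabet" using Cons.prems by auto
  have "z \<noteq> []" using Cons.prems chi_ne[OF b, of k] by auto
  then obtain d z' where z: "z = d # z'" by (cases z) auto
  have d: "d \<in> alphabet" and z': "set z' \<subseteq> alphabet" using Cons.prems z by auto
  have e: "chi k d @ sw k z' = chi k b @ sw k y" using Cons.prems z by simp
  have "chi k d = chi k b"
  proof (rule block_eq[OF b d e])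
    show "sw k z' = [] \<or> hd (sw k z') \<noteq> 1" using sw_ne[OF z', of k] by (cases "z' = []") auto
    show "sw k y = [] \<or> hd (sw k y) \<noteq> 1" using sw_ne[OF y, of k] by (cases "y = []") auto
  qed
  then have "d = b" using chi_inj[OF d b Cons.prems(1)] by simp
  moreover have "sw k z' = sw k y" using e \<open>chi k d = chi k b\<close> by simp
  ultimately show ?case using Cons.IH[OF Cons.prems(1) y z'] z by simp
qed

lemma onerun: "k \<ge> 1 \<Longrightarrow> set v \<subseteq> alphabet \<Longrightarrow> t < length (sw k v) \<Longrightarrow> sw k v ! t = 1 \<Longrightarrow>
  \<exists>s<t. t \<le> s + k \<and> sw k v ! s \<noteq> 1"
proof (induction v arbitrary: t)
  case Nil then show ?case by simp
next
  case (Cons b v)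
  have b: "b \<in> alphabet" and v: "set v \<subseteq> alphabet" using Cons.prems by auto
  show ?case
  proof (cases "t < length (chi k b)")
    case True
    then have "chi k b ! t = 1" using Cons.prems by (simp add: nth_append)
    then have "t \<noteq> 0" using chi_hd[OF b, of k] by (cases t) auto
    moreover have "t \<le> k" using chi_len[OF b Cons.prems(1)] True by simp
    ultimately show ?thesis using True chi_hd[OF b, of k] by (intro exI[of _ 0]) (auto simp: nth_append)
  next
    case False
    then have "t - length (chi k b) < length (sw k v)" "sw k v ! (t - length (chi k b)) = 1"
      using Cons.prems by (auto simp: nth_append)
    from Cons.IH[OF Cons.prems(1) v this] obtain s where
      "s < t - length (chi k b)" "t - length (chi k b) \<le> s + k" "sw k v ! s \<noteq> 1" by blast
    then show ?thesis using False
      by (intro exI[of _ "s + length (chi k b)"]) (auto simp: nth_append)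
  qed
qed

lemma no_ones: "k \<ge> 1 \<Longrightarrow> set v \<subseteq> alphabet \<Longrightarrow> \<not> sublist (replicate (Suc k) 1) (sw k v)"
proof
  assume k: "k \<ge> 1" and v: "set v \<subseteq> alphabet" and "sublist (replicate (Suc k) 1) (sw k v)"
  then obtain ps ss where e: "sw k v = ps @ replicate (Suc k) 1 @ ss" by (auto simp: sublist_def)
  have "sw k v ! (length ps + k) = 1" "length ps + k < length (sw k v)" using e by (auto simp: nth_append nth_Cons')
  from onerun[OF k v this(2) this(1)] obtain s where
    s: "s < length ps + k" "length ps + k \<le> s + k" "sw k v ! s \<noteq> 1" by blast
  have "(replicate (Suc k) 1 @ ss) ! (s - length ps) = (1::nat)" using s(1,2) by (simp del: replicate_Suc add: nth_append; linarith)
  then have "sw k v ! s = 1" using e s(1,2) by (simp add: nth_append)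
  then show False using s(3) by simp
qed



definition Lang :: "(nat \<Rightarrow> nat) \<Rightarrow> nat \<Rightarrow> nat list set" where
  "Lang ks j = {w. \<exists>n a. a \<in> alphabet \<and> sublist w (chi_comp ks j n [a])}"

abbreviation pw :: "nat \<Rightarrow> nat list \<Rightarrow> nat list" where
  "pw R u \<equiv> concat (replicate R u)"

definition Pw :: "(nat \<Rightarrow> nat) \<Rightarrow> nat \<Rightarrow> nat list \<Rightarrow> bool" where
  "Pw ks j u \<longleftrightarrow> (\<forall>R. pw R u \<in> Lang ks j)"

lemma cc_step: "j \<le> n \<Longrightarrow> chi_comp ks j n w = sw (ks j) (chi_comp ks (Suc j) n w)"
  by (simp del: upt_Suc add: chi_comp_def upt_conv_Cons)

lemma cc_triv: "n < j \<Longrightarrow> chi_comp ks j n w = w"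
  by (simp add: chi_comp_def)

lemma cc_set: "set w \<subseteq> alphabet \<Longrightarrow> set (chi_comp ks j n w) \<subseteq> alphabet"
proof -
  assume w: "set w \<subseteq> alphabet"
  have "set (foldr (\<lambda>j u. subst_word (chi (ks j)) u) xs w) \<subseteq> alphabet" for xs
  proof (induction xs)
    case (Cons x xs) then show ?case using sw_set[of "foldr (\<lambda>j u. subst_word (chi (ks j)) u) xs w" "ks x"] by simp
  qed (simp add: w)
  then show ?thesis by (simp add: chi_comp_def)
qed

lemma Lang_set: "w \<in> Lang ks j \<Longrightarrow> set w \<subseteq> alphabet"
proof -
  assume "w \<in> Lang ks j"
  then obtain n a where a: "a \<in> alphabet" and sl: "sublist w (chi_comp ks j n [a])"
    by (auto simp: Lang_def)
  have "set (chi_comp ks j n [a]) \<subseteq> alphabet" using cc_set[of "[a]"] a by simp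
  then show ?thesis using set_mono_sublist[OF sl] by blast
qed

lemma Lang_sub: "w \<in> Lang ks j \<Longrightarrow> sublist w' w \<Longrightarrow> w' \<in> Lang ks j"
  unfolding Lang_def using sublist_order.order_trans by blast

lemma Lang_Nil: "[] \<in> Lang ks j"
  unfolding Lang_def by (auto simp: alph_iff)

lemma sublist_single: "x \<in> set ys \<Longrightarrow> sublist [x] ys"
  by (metis split_list sublist_def append_Cons append_Nil)

lemma Lang_step:
  assumes k: "ks j \<ge> 1" and w: "w \<in> Lang ks j"
  shows "\<exists>v. set v \<subseteq> alphabet \<and> sublist w (sw (ks j) v) \<and> (\<forall>y. sublist y v \<longrightarrow> y \<in> Lang ks (Suc j))"
proof -
  from w obtain n a where a: "a \<in> alphabet" and sl: "sublist w (chi_comp ks j n [a])"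
    by (auto simp: Lang_def)
  show ?thesis
  proof (cases "j \<le> n")
    case True
    let ?v = "chi_comp ks (Suc j) n [a]"
    have "set ?v \<subseteq> alphabet" using cc_set a by auto
    moreover have "sublist w (sw (ks j) ?v)" using sl cc_step[OF True] by simp
    moreover have "\<forall>y. sublist y ?v \<longrightarrow> y \<in> Lang ks (Suc j)" using a by (auto simp: Lang_def)
    ultimately show ?thesis by blast
  next
    case False
    then have wa: "sublist w [a]" using sl cc_triv[of n j] by simp
    obtain b where b: "b \<in> alphabet" "sublist [a] (chi (ks j) b)"
    proof -
      consider "a = 1" | "a = 2" | "a = 3" using a by (auto simp: alph_iff)
      then show ?thesis
      proof cases
        case 1
        have "1 \<in> set (chi (ks j) 2)" using k by (simp add: chi_def)
        then have "sublist [a] (chi (ks j) 2)" using 1 sublist_single by simp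
        then show ?thesis using that[of 2] by (auto simp: alph_iff)
      next
        case 2 then show ?thesis using that[of 1] by (simp add: alph_iff chi_def)
      next
        case 3 then show ?thesis using that[of 3] sublist_single[of 3 "chi (ks j) 3"] by (simp add: alph_iff chi_def)
      qed
    qed
    have "chi_comp ks (Suc j) 0 [b] = [b]" by (simp add: cc_triv)
    then have "\<forall>y. sublist y [b] \<longrightarrow> y \<in> Lang ks (Suc j)" using b(1) unfolding Lang_def
      by (metis (mono_tags, lifting) mem_Collect_eq)
    moreover have "sublist w (sw (ks j) [b])" using wa b(2) sublist_order.order_trans by auto
    ultimately show ?thesis using b(1) by (intro exI[of _ "[b]"]) auto
  qed
qed

lemma pw_Suc': "pw (Suc R) u = pw R u @ u"
  by (metis concat.simps(2) concat_append concat.simps(1) append_Nil2 replicate_Suc replicate_append_same)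

lemma sw_pw: "sw k (pw R u) = pw R (sw k u)"
  by (induction R) auto

lemma pw_set: "set u \<subseteq> alphabet \<Longrightarrow> set (pw R u) \<subseteq> alphabet"
  by (induction R) auto

lemma pw_rot: "pw (Suc R) u = take i u @ pw R (drop i u @ take i u) @ drop i u"
proof (induction R)
  case 0 then show ?case by simp
next
  case (Suc R)
  have "pw (Suc (Suc R)) u = pw (Suc R) u @ u" by (rule pw_Suc')
  also have "\<dots> = take i u @ pw R (drop i u @ take i u) @ drop i u @ take i u @ drop i u"
    using Suc by simp
  also have "\<dots> = take i u @ (pw R (drop i u @ take i u) @ (drop i u @ take i u)) @ drop i u"
    by simp
  also have "\<dots> = take i u @ pw (Suc R) (drop i u @ take i u) @ drop i u"
    by (simp only: pw_Suc')
  finally show ?case .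
qed

lemma Pw_set: "Pw ks j u \<Longrightarrow> set u \<subseteq> alphabet"
proof -
  assume "Pw ks j u"
  then have "pw (Suc 0) u \<in> Lang ks j" unfolding Pw_def by blast
  then show ?thesis using Lang_set[of u ks j] by simp
qed

lemma powdec:
  assumes k: "ks j \<ge> 1" and P: "Pw ks j u" and u: "u \<noteq> []" "hd u \<noteq> 1"
  shows "\<exists>u'. set u' \<subseteq> alphabet \<and> u = sw (ks j) u' \<and> Pw ks (Suc j) u'"
proof -
  have C: "\<exists>y. set y \<subseteq> alphabet \<and> pw R u = sw (ks j) y \<and> y \<in> Lang ks (Suc j)" if R: "R \<ge> 1" for R
  proof -
    have "pw (Suc R) u \<in> Lang ks j" using P unfolding Pw_def by blast
    moreover have "sublist (pw R u @ [hd u]) (pw (Suc R) u)"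
    proof -
      have "pw (Suc R) u = [] @ (pw R u @ [hd u]) @ tl u" using u pw_Suc'[of R u] by simp
      then show ?thesis unfolding sublist_def by blast
    qed
    ultimately have "pw R u @ [hd u] \<in> Lang ks j" by (rule Lang_sub)
    from Lang_step[OF k this] obtain v where v: "set v \<subseteq> alphabet"
      "sublist (pw R u @ [hd u]) (sw (ks j) v)" "\<forall>y. sublist y v \<longrightarrow> y \<in> Lang ks (Suc j)" by blast
    have ne: "pw R u \<noteq> []" "hd (pw R u) = hd u" using R u
      by (cases R; cases u; auto)+
    from decode[OF v(1) v(2)] ne u obtain y where
      "set y \<subseteq> alphabet" "pw R u = sw (ks j) y" "sublist y v" by auto
    then show ?thesis using v(3) by blast
  qed
  from C[of 1] obtain u' where u': "set u' \<subseteq> alphabet" "u = sw (ks j) u'" by auto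
  have "pw R u' \<in> Lang ks (Suc j)" for R
  proof (cases "R = 0")
    case True then show ?thesis by (simp add: Lang_Nil)
  next
    case False
    from C[of R] False obtain y where y: "set y \<subseteq> alphabet" "pw R u = sw (ks j) y" "y \<in> Lang ks (Suc j)"
      by auto
    have "sw (ks j) y = sw (ks j) (pw R u')" using y(2) u'(2) sw_pw by simp
    then have "y = pw R u'" using sw_inj[OF k y(1) pw_set[OF u'(1)]] by simp
    then show ?thesis using y(3) by simp
  qed
  then show ?thesis using u' by (auto simp: Pw_def)
qed



lemma pw_rep: "pw R (replicate m a) = replicate (R * m) a"
  by (induction R) (auto simp: replicate_add)

lemma all1:
  assumes k: "ks j \<ge> 1" and P: "Pw ks j u" and u: "u \<noteq> []" "set u \<subseteq> {1}"
  shows False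
proof -
  let ?k = "ks j"
  define n where "n = length u"
  have "\<forall>y\<in>set u. y = 1" using u(2) by auto
  then have ur: "u = replicate n 1" unfolding n_def using replicate_length_same by metis
  have "pw (Suc ?k) u \<in> Lang ks j" using P unfolding Pw_def by blast
  then have L: "replicate (Suc ?k * n) 1 \<in> Lang ks j" using pw_rep[of "Suc ?k" n 1] ur by simp
  obtain m where m: "n = Suc m" using u(1) unfolding n_def by (cases u) auto
  have "replicate (Suc ?k * n) (1::nat) = replicate (Suc ?k) 1 @ replicate (Suc ?k * m) 1"
    unfolding m replicate_add[symmetric] by (simp add: algebra_simps)
  then have "sublist (replicate (Suc ?k) 1) (replicate (Suc ?k * n) (1::nat))"
    unfolding sublist_def by (metis append_Nil)
  with L have "replicate (Suc ?k) 1 \<in> Lang ks j" by (rule Lang_sub)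
  from Lang_step[OF k this] obtain v where "set v \<subseteq> alphabet" "sublist (replicate (Suc ?k) 1) (sw ?k v)"
    by blast
  then show False using no_ones[OF k] by blast
qed

lemma chi_letters:
  assumes b: "b \<in> alphabet" and k: "k \<ge> 1"
  shows "2 \<in> set (chi k b) \<longleftrightarrow> b = 1"
    and "set (chi k b) \<subseteq> {3} \<longleftrightarrow> b = 3 \<and> k = 1"
proof -
  consider "b = 1" | "b = 2" | "b = 3" using b by (auto simp: alph_iff)
  then show "2 \<in> set (chi k b) \<longleftrightarrow> b = 1" by cases (simp_all add: chi_def)
next
  consider "b = 1" | "b = 2" | "b = 3" using b by (auto simp: alph_iff)
  then show "set (chi k b) \<subseteq> {3} \<longleftrightarrow> b = 3 \<and> k = 1"
  proof cases
    case 2 then show ?thesis using k by (cases k) (simp_all add: chi_def)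
  next
    case 3 then show ?thesis using k by (cases "k - 1") (simp_all add: chi_def)
  qed (simp_all add: chi_def)
qed

lemma all3:
  assumes k: "ks j \<ge> 1" and P: "Pw ks j u" and u: "u \<noteq> []" "set u \<subseteq> {3}"
  shows "ks j = 1 \<and> (\<exists>u'. u' \<noteq> [] \<and> set u' \<subseteq> {3} \<and> Pw ks (Suc j) u')"
proof -
  have "hd u \<noteq> 1" using u by (cases u) auto
  from powdec[OF k P u(1) this] obtain u' where u': "set u' \<subseteq> alphabet" "u = sw (ks j) u'"
    "Pw ks (Suc j) u'" by blast
  have ne: "u' \<noteq> []" using u u' by auto
  have all: "b = 3 \<and> ks j = 1" if "b \<in> set u'" for b
  proof -
    have "set (chi (ks j) b) \<subseteq> set u" using that u'(2) by (auto simp: subst_word_def)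
    moreover have "b \<in> alphabet" using u'(1) that by blast
    ultimately show ?thesis using chi_letters(2)[of b "ks j"] u(2) k by (meson order.trans)
  qed
  from ne obtain b where "b \<in> set u'" by (cases u') auto
  then have "ks j = 1" using all by blast
  moreover have "set u' \<subseteq> {3}" using all by blast
  ultimately show ?thesis using ne u'(3) by blast
qed

lemma all3_never:
  assumes C: "coding_seq_infinite_type ks" and j: "j \<ge> 1"
    and P: "Pw ks j u" and u: "u \<noteq> []" "set u \<subseteq> {3}"
  shows False
proof -
  have k: "\<And>i. i \<ge> 1 \<Longrightarrow> ks i \<ge> 1" using C by (simp add: coding_seq_infinite_type_def)
  have "\<exists>u. u \<noteq> [] \<and> set u \<subseteq> {3} \<and> Pw ks (j + d) u" for d
  proof (induction d)
    case 0 then show ?case using P u by auto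
  next
    case (Suc d)
    then obtain w where "w \<noteq> []" "set w \<subseteq> {3}" "Pw ks (j + d) w" by blast
    from all3[OF k this(3) this(1,2)] j show ?case by auto
  qed
  then have one: "ks (j + d) = 1" for d using all3 k j by (metis le_add1 order.trans)
  have "infinite {i. i \<ge> 1 \<and> ks (2 * i) > 1}" using C by (simp add: coding_seq_infinite_type_def)
  then obtain i where "i \<in> {i. i \<ge> 1 \<and> ks (2 * i) > 1}" "i > j"
    using infinite_nat_iff_unbounded by (metis (no_types, lifting))
  then have "ks (j + (2 * i - j)) > 1" by auto
  then show False using one by simp
qed

lemma step1:
  assumes C: "coding_seq_infinite_type ks"
    and IH: "\<And>q j w. q < length u \<Longrightarrow> j \<ge> 1 \<Longrightarrow> length w = q \<Longrightarrow> w \<noteq> [] \<Longrightarrow> Pw ks j w \<Longrightarrow> False"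
    and j: "j \<ge> 1" and P: "Pw ks j u" and u: "u \<noteq> []" "1 \<in> set u"
  shows False
proof -
  have k: "ks j \<ge> 1" using C j by (simp add: coding_seq_infinite_type_def)
  show False
  proof (cases "set u \<subseteq> {1}")
    case True then show False using all1[OF k P u(1)] by blast
  next
    case False
    then obtain i where i: "i < length u" "u ! i \<noteq> 1" by (metis in_set_conv_nth singletonI subsetI)
    define r where "r = drop i u @ take i u"
    have Pr: "Pw ks j r" unfolding Pw_def
    proof
      fix R
      have "pw (Suc R) u \<in> Lang ks j" using P unfolding Pw_def by blast
      moreover have "sublist (pw R r) (pw (Suc R) u)" unfolding r_def pw_rot[of R u i]
        by (metis sublist_appendI)
      ultimately show "pw R r \<in> Lang ks j" by (rule Lang_sub)
    qed
    have setr: "set r = set u" unfolding r_def by (metis append_take_drop_id set_append sup_commute)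
    have lr: "length r = length u" unfolding r_def by simp
    have rne: "r \<noteq> []" using lr u by auto
    have hr: "hd r \<noteq> 1" using i unfolding r_def by (simp add: hd_drop_conv_nth)
    from powdec[OF k Pr rne hr] obtain u' where u': "set u' \<subseteq> alphabet" "r = sw (ks j) u'"
      "Pw ks (Suc j) u'" by blast
    have "length u' < length r" using sw_len_strict[OF u'(1)] u'(2) setr u(2) by metis
    moreover have "u' \<noteq> []" using u'(2) rne by auto
    ultimately show False using IH[of "length u'" "Suc j" u'] lr u'(3) by simp
  qed
qed

lemma main_nopow:
  assumes C: "coding_seq_infinite_type ks"
  shows "j \<ge> 1 \<Longrightarrow> length u = p \<Longrightarrow> u \<noteq> [] \<Longrightarrow> Pw ks j u \<Longrightarrow> False"
proof (induction p arbitrary: j u rule: less_induct)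
  case (less p)
  have k: "ks j \<ge> 1" using C less.prems(1) by (simp add: coding_seq_infinite_type_def)
  have us: "set u \<subseteq> alphabet" using Pw_set[OF less.prems(4)] .
  show False
  proof (cases "1 \<in> set u")
    case True
    show False
      by (rule step1[OF C _ less.prems(1) less.prems(4) less.prems(3) True])
         (use less.IH less.prems(2) in blast)
  next
    case no1: False
    show False
    proof (cases "2 \<in> set u")
      case True
      have "hd u \<noteq> 1" using no1 less.prems(3) by (cases u) auto
      from powdec[OF k less.prems(4) less.prems(3) this] obtain u' where
        u': "set u' \<subseteq> alphabet" "u = sw (ks j) u'" "Pw ks (Suc j) u'" by blast
      obtain b where b: "b \<in> set u'" "2 \<in> set (chi (ks j) b)"
        using True u'(2) by (auto simp: subst_word_def)
      then have "b = 1" using chi_letters(1)[of b "ks j"] u'(1) k by blast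
      with b have one: "1 \<in> set u'" by simp
      have len: "length u' \<le> length u" using sw_len[OF u'(1)] u'(2) by simp
      have ne: "u' \<noteq> []" using one by auto
      show False
      proof (rule step1[OF C _ _ u'(3) ne one])
        fix q j' w assume h: "q < length u'" "j' \<ge> 1" "length w = q" "w \<noteq> []" "Pw ks j' w"
        have "q < p" using h(1) len less.prems(2) by simp
        then show False using less.IH[OF _ h(2,3,4,5)] by blast
      qed simp
    next
      case False
      with no1 us have "set u \<subseteq> {3}" by (auto simp: alph_iff)
      then show False using all3_never[OF C less.prems(1,4,3)] by blast
    qed
  qed
qed



lemma funpow_shift: "(shift ^^ k) x = (\<lambda>t. x (t + k))"
  by (induction k) (auto simp: shift_def)

lemma map_upt_shift: "map x [a..<a + k] = map (\<lambda>t. x (a + t)) [0..<k]"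
  by (rule nth_equalityI) auto

lemma aper:
  assumes C: "coding_seq_infinite_type ks"
  shows "aperiodic (sadic_subshift ks 1)"
  unfolding aperiodic_def
proof
  assume "\<exists>x\<in>sadic_subshift ks 1. \<exists>k\<ge>1. (shift ^^ k) x = x"
  then obtain x k where x: "x \<in> sadic_subshift ks 1" and k: "k \<ge> 1" and per: "(shift ^^ k) x = x" by blast
  have per1: "x (t + k) = x t" for t using fun_cong[OF per, of t] by (simp add: funpow_shift)
  have perR: "x (R * k + t) = x t" for R t
  proof (induction R)
    case (Suc R)
    have "x (Suc R * k + t) = x ((R * k + t) + k)" by (simp add: algebra_simps)
    then show ?case using per1 Suc by simp
  qed simp
  define u where "u = map x [0..<k]"
  have pwu: "pw R u = map x [0..<R * k]" for R
  proof (induction R)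
    case (Suc R)
    have u2: "u = map x [R * k..<R * k + k]"
      unfolding u_def map_upt_shift perR by simp
    have "pw (Suc R) u = map x [0..<R * k] @ u" using Suc pw_Suc'[of R u] by (simp only:)
    also have "map x [0..<R * k] @ u = map x [0..<R * k] @ map x [R * k..<R * k + k]"
      by (subst u2) (rule refl)
    also have "\<dots> = map x [0..<Suc R * k]"
      using upt_add_eq_append[of 0 "R * k" k] by (simp add: map_append[symmetric] add.commute del: map_append)
    finally show ?case .
  qed simp
  have L: "map x [0..<m] \<in> Lang ks 1" for m
  proof -
    from x obtain y j where y: "y \<in> acc_points {chi_comp ks 1 n [a] |n a. n \<ge> 1 \<and> a \<in> alphabet}"
      and yx: "\<forall>t<m. y (j + t) = x t"
      unfolding sadic_subshift_def orbit_closure_def by blast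
    from y obtain w where w: "w \<in> {chi_comp ks 1 n [a] |n a. n \<ge> 1 \<and> a \<in> alphabet}"
      "j + m \<le> length w" "\<forall>t<j + m. w ! t = y t"
      unfolding acc_points_def by blast
    from w(1) obtain n a where wn: "w = chi_comp ks 1 n [a]" "a \<in> alphabet" by blast
    have e: "map x [0..<m] = take m (drop j w)"
      by (rule nth_equalityI) (use w(2,3) yx in auto)
    have "w = take j w @ take m (drop j w) @ drop m (drop j w)"
      by (simp only: append_take_drop_id)
    then have "sublist (take m (drop j w)) w" unfolding sublist_def by blast
    then have "sublist (map x [0..<m]) (chi_comp ks 1 n [a])" using e wn by simp
    then show ?thesis using wn(2) unfolding Lang_def by blast
  qed
  have "Pw ks 1 u" unfolding Pw_def pwu using L by blast
  moreover have "u \<noteq> []" using k by (simp add: u_def)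
  ultimately show False using main_nopow[OF C, of 1 u "length u"] by simp
qed

lemma set_sw: "set (sw k w) = (\<Union>b\<in>set w. set (chi k b))"
  by (simp add: subst_word_def)

lemma cc_split: "m \<le> Suc i \<Longrightarrow> i \<le> n \<Longrightarrow> chi_comp ks m n w = chi_comp ks m i (chi_comp ks (Suc i) n w)"
proof -
  assume a: "m \<le> Suc i" "i \<le> n"
  have "[m..<Suc n] = [m..<Suc i] @ [Suc i..<Suc n]"
    using a upt_add_eq_append[of m "Suc i" "Suc n - Suc i"] by simp
  then show ?thesis by (simp add: chi_comp_def)
qed

lemma cc_pres:
  assumes "\<And>i w. i \<ge> m \<Longrightarrow> Q w \<Longrightarrow> Q (sw (ks i) w)" and "Q w"
  shows "Q (chi_comp ks m n w)"
proof -
  have "set xs \<subseteq> {m..} \<Longrightarrow> Q (foldr (\<lambda>j u. subst_word (chi (ks j)) u) xs w)" for xs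
    by (induction xs) (use assms in auto)
  moreover have "set [m..<Suc n] \<subseteq> {m..}" by auto
  ultimately show ?thesis unfolding chi_comp_def by blast
qed

lemma set_chi1: "set (chi k 1) = {2}" by (simp add: chi_def)
lemma set_chi2: "k \<ge> 1 \<Longrightarrow> set (chi k 2) = {1, 3}" by (cases k) (auto simp: chi_def)
lemma set_chi3: "k > 1 \<Longrightarrow> set (chi k 3) = {1, 3}" by (cases "k - 1") (auto simp: chi_def)
lemma set_chi3': "3 \<in> set (chi k 3)" by (simp add: chi_def)

lemma sub_sw: "b \<in> set w \<Longrightarrow> set (chi k b) \<subseteq> set (sw k w)"
  unfolding set_sw by blast

lemma full_pres: "k \<ge> 1 \<Longrightarrow> alphabet \<subseteq> set w \<Longrightarrow> alphabet \<subseteq> set (sw k w)"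
proof -
  assume k: "k \<ge> 1" and a: "alphabet \<subseteq> set w"
  have "1 \<in> set w" "2 \<in> set w" using a by (auto simp: alphabet_def)
  then have "set (chi k 1) \<subseteq> set (sw k w)" "set (chi k 2) \<subseteq> set (sw k w)" by (auto dest: sub_sw)
  then show ?thesis using set_chi1 set_chi2[OF k] by (auto simp: alphabet_def)
qed

lemma three_pres: "3 \<in> set w \<Longrightarrow> 3 \<in> set (sw k w)"
  using sub_sw[of 3 w k] set_chi3' by blast

lemma three_big: "3 \<in> set w \<Longrightarrow> k > 1 \<Longrightarrow> {1, 3} \<subseteq> set (sw k w)"
  using sub_sw[of 3 w k] set_chi3 by blast

lemma one3_big: "{1, 3} \<subseteq> set w \<Longrightarrow> k > 1 \<Longrightarrow> alphabet \<subseteq> set (sw k w)"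
proof -
  assume a: "{1, 3} \<subseteq> set w" and k: "k > 1"
  then have "set (chi k 1) \<subseteq> set (sw k w)" "set (chi k 3) \<subseteq> set (sw k w)" by (auto dest: sub_sw)
  then show ?thesis using set_chi1 set_chi3[OF k] by (auto simp: alphabet_def)
qed

lemma one3_two: "{1, 3} \<subseteq> set w \<Longrightarrow> k \<ge> 1 \<Longrightarrow> k' \<ge> 1 \<Longrightarrow> {1, 3} \<subseteq> set (sw k' (sw k w))"
proof -
  assume a: "{1, 3} \<subseteq> set w" "k \<ge> 1" "k' \<ge> 1"
  have "set (chi k 1) \<subseteq> set (sw k w)" using a by (auto dest: sub_sw)
  then have "2 \<in> set (sw k w)" using set_chi1 by auto
  then have "set (chi k' 2) \<subseteq> set (sw k' (sw k w))" by (rule sub_sw)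
  then show ?thesis using set_chi2[OF a(3)] by auto
qed

lemma parB:
  assumes k: "\<And>i. i \<ge> 1 \<Longrightarrow> ks i \<ge> 1" and m: "m \<ge> 1"
  shows "{1, 3} \<subseteq> set w \<Longrightarrow> m \<le> j' \<Longrightarrow> j = j' + 2 * d \<Longrightarrow> ks j' > 1 \<Longrightarrow>
    alphabet \<subseteq> set (chi_comp ks m j w)"
proof (induction d arbitrary: j w)
  case 0
  then have j: "j = j'" by simp
  have e: "chi_comp ks m j w = chi_comp ks m (j - 1) (chi_comp ks j j w)"
    using cc_split[of m "j - 1" j ks w] 0 m j by simp
  have "chi_comp ks j j w = sw (ks j) w" using cc_step[of j j ks w] cc_triv[of j "Suc j" ks w] by simp
  then have "alphabet \<subseteq> set (chi_comp ks j j w)" using one3_big 0 j by simp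
  then show ?case unfolding e
    by (rule cc_pres[where Q = "\<lambda>w. alphabet \<subseteq> set w", rotated]) (use full_pres k m in auto)
next
  case (Suc d)
  have e: "chi_comp ks m j w = chi_comp ks m (j - 2) (chi_comp ks (j - 1) j w)"
    using cc_split[of m "j - 2" j ks w] Suc.prems m by simp
  have "chi_comp ks (j - 1) j w = sw (ks (j - 1)) (sw (ks j) w)"
    using cc_step[of "j - 1" j ks] cc_step[of j j ks w] cc_triv[of j "Suc j" ks w] Suc.prems
    by (simp add: Suc_diff_Suc numeral_2_eq_2)
  moreover have "{1, 3} \<subseteq> set (sw (ks (j - 1)) (sw (ks j) w))"
    using one3_two[OF Suc.prems(1)] k Suc.prems m by simp
  ultimately have "{1, 3} \<subseteq> set (chi_comp ks (j - 1) j w)" by simp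
  from Suc.IH[OF this Suc.prems(2) _ Suc.prems(4)] Suc.prems(3) show ?case unfolding e by simp
qed

lemma prim:
  assumes C: "coding_seq_infinite_type ks"
  shows "sadic_primitive ks"
  unfolding sadic_primitive_def
proof (intro allI impI)
  fix m :: nat assume m: "m \<ge> 1"
  have k: "\<And>i. i \<ge> 1 \<Longrightarrow> ks i \<ge> 1" using C by (simp add: coding_seq_infinite_type_def)
  have ev: "\<exists>i>b. ks (2 * i) > 1" for b
  proof -
    have "infinite {i. i \<ge> 1 \<and> ks (2 * i) > 1}" using C by (simp add: coding_seq_infinite_type_def)
    then show ?thesis using infinite_nat_iff_unbounded by (metis (no_types, lifting) mem_Collect_eq)
  qed
  have od: "\<exists>i>b. ks (2 * i - 1) > 1" for b
  proof -
    have "infinite {i. i \<ge> 1 \<and> ks (2 * i - 1) > 1}" using C by (simp add: coding_seq_infinite_type_def)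
    then show ?thesis using infinite_nat_iff_unbounded by (metis (no_types, lifting) mem_Collect_eq)
  qed
  obtain ie where ie: "ie > m" "ks (2 * ie) > 1" using ev by blast
  obtain io where io: "io > m" "ks (2 * io - 1) > 1" using od by blast
  define P where "P = max (2 * ie) (2 * io - 1)"
  have par: "\<exists>j' d. m \<le> j' \<and> J = j' + 2 * d \<and> ks j' > 1" if J: "J \<ge> P" for J
  proof (cases "even J")
    case True
    then obtain d where "J - 2 * ie = 2 * d" using J unfolding P_def
      by (metis dvd_diff_nat dvd_triv_left evenE)
    then show ?thesis using ie J unfolding P_def by (intro exI[of _ "2 * ie"] exI[of _ d]) auto
  next
    case False
    have "odd (2 * io - 1)" using io by presburger
    then obtain d where "J - (2 * io - 1) = 2 * d" using J False unfolding P_def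
      by (metis (no_types, lifting) odd_two_times_div_two_succ even_diff_nat dvd_diff_nat evenE odd_add)
    then show ?thesis using io J unfolding P_def by (intro exI[of _ "2 * io - 1"] exI[of _ d]) auto
  qed
  obtain iq where iq: "iq > P" "ks (2 * iq) > 1" using ev by blast
  define q where "q = 2 * iq"
  have q: "q > P" "ks q > 1" using iq unfolding q_def by auto
  have Pm: "P \<ge> m" unfolding P_def using ie by auto
  define n where "n = q + 2"
  have step2: "chi_comp ks (Suc q) n w = sw (ks (Suc q)) (sw (ks n) w)" for w
    using cc_step[of "Suc q" n ks] cc_step[of n n ks w] cc_triv[of n "Suc n" ks w] unfolding n_def
    by (simp add: numeral_2_eq_2)
  have step1': "chi_comp ks (Suc (Suc q)) n w = sw (ks n) w" for w
    using cc_step[of n n ks w] cc_triv[of n "Suc n" ks w] unfolding n_def by (simp add: numeral_2_eq_2)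
  have full: "alphabet \<subseteq> set (chi_comp ks m J w)" if "{1, 3} \<subseteq> set w" "J \<ge> P" for J w
  proof -
    from par[OF that(2)] obtain j' d where "m \<le> j'" "J = j' + 2 * d" "ks j' > 1" by blast
    then show ?thesis using parB[where ks=ks and m=m and w=w and j'=j' and j=J and d=d, OF k m that(1)] by blast
  qed
  have "\<forall>a\<in>alphabet. alphabet \<subseteq> set (chi_comp ks m n [a])"
  proof
    fix a assume "a \<in> alphabet"
    then consider "a = 1" | "a = 2" | "a = 3" by (auto simp: alph_iff)
    then show "alphabet \<subseteq> set (chi_comp ks m n [a])"
    proof cases
      case 1
      have e: "chi_comp ks m n [a] = chi_comp ks m q (chi_comp ks (Suc q) n [a])"
        using cc_split[of m q n] Pm q unfolding n_def by simp
      have "{1, 3} \<subseteq> set (chi_comp ks (Suc q) n [a])" unfolding step2 using 1 k[of "Suc q"]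
        by (simp add: chi_def)
      then show ?thesis unfolding e using full q by simp
    next
      case 2
      have e: "chi_comp ks m n [a] = chi_comp ks m (Suc q) (chi_comp ks (Suc (Suc q)) n [a])"
        using cc_split[of m "Suc q" n] Pm q unfolding n_def by simp
      have "{1, 3} \<subseteq> set (chi_comp ks (Suc (Suc q)) n [a])" unfolding step1' using 2 k[of n]
        unfolding n_def by (simp add: chi_def)
      then show ?thesis unfolding e using full q by simp
    next
      case 3
      have e: "chi_comp ks m n [a] = chi_comp ks m (q - 1) (chi_comp ks q n [a])"
        using cc_split[of m "q - 1" n] Pm q unfolding n_def by simp
      have "3 \<in> set (chi_comp ks (Suc q) n [a])"
        by (rule cc_pres[where Q = "\<lambda>w. 3 \<in> set w"]) (use three_pres 3 in auto)
      then have "{1, 3} \<subseteq> set (sw (ks q) (chi_comp ks (Suc q) n [a]))" using three_big q by simp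
      then have "{1, 3} \<subseteq> set (chi_comp ks q n [a])" using cc_step[of q n ks] unfolding n_def by simp
      then show ?thesis unfolding e using full q by simp
    qed
  qed
  moreover have "n \<ge> m" using Pm q unfolding n_def by simp
  ultimately show "\<exists>n\<ge>m. \<forall>a\<in>alphabet. alphabet \<subseteq> set (chi_comp ks m n [a])" by blast
qed

theorem proposition2p3:
  fixes ks :: "nat \<Rightarrow> nat"
  assumes "coding_seq_infinite_type ks"
  shows "sadic_primitive ks \<and> sadic_comb_recognizable ks \<and> aperiodic (sadic_subshift ks 1)"
  using prim[OF assms] aper[OF assms] recog by (simp add: sadic_comb_recognizable_def)

end
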